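(* Fix any $\epsilon>0$. There exists a measurable set $S_\epsilon\subset\mathbb{T}^2$ with $\mu(S_\epsilon)\ge 9/32-\epsilon$ such that the following holds. For any $\theta,\alpha\in\mathbb{T}^2$ with $\{\theta,\theta+\alpha,\theta+2\alpha\}\subset S_\epsilon$, either \[2\psi(\theta+\alpha)\ge \psi(\theta)+\psi(\theta+2\alpha)+1/2,\] or otherwise, writing $d:=\frac{\pi^{-1}(\theta+2\alpha)-\pi^{-1}(\theta)}{2}\in\mathbb{R}^2$ (so that $\psi(\theta+2\alpha)=\psi(\theta)+2(d_1+d_2)$), we have \[\psi(\theta+\alpha)=\psi(\theta)+(d_1+d_2),\] and furthermore, if $|d_1+d_2|\le \frac{\epsilon}{1000}$, then \[(1-\{p(\theta)\})^2+(1-\{p(\theta+2\alpha)\})^2-2(1-\{p(\theta+\alpha)\})^2\ge d_1^2.\]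
   Context: $\mathbb{T}^2:=(\mathbb{R}/\mathbb{Z})^2$ with normalized Haar (Lebesgue) measure $\mu$. $\pi:\mathbb{R}^2\to\mathbb{T}^2$, $x\mapsto x+\mathbb{Z}^2$, and for $\theta\in\mathbb{T}^2$, $\pi^{-1}(\theta)$ denotes the unique $x\in[0,1)^2$ with $\pi(x)=\theta$. The sum map $\psi:\mathbb{T}^2\to[0,2)$ is $\psi(\theta)=\pi^{-1}(\theta)_1+\pi^{-1}(\theta)_2$. The projection $p:\mathbb{T}^2\to[0,1)$ is $p(\theta)=\pi^{-1}(\theta)_1$. For $x\in[0,1)$, $\{x\}:=x$ if $x\in[0,1/2)$ and $\{x\}:=x-1/2$ otherwise (this is not the usual fractional part). *)

theory Defs
  imports "HOL-Analysis.Analysis"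
begin

text \<open>The torus T^2 = (R/Z)^2 is represented by its canonical fundamental domain
  [0,1)^2 inside real \<times> real; a point theta of T^2 is identified with pi^{-1}(theta).
  Normalized Haar measure is Lebesgue measure restricted to [0,1)^2 (which has mass 1).\<close>

definition T2 :: "(real \<times> real) set" where
  "T2 = {0..<1} \<times> {0..<1}"

definition tadd :: "real \<times> real \<Rightarrow> real \<times> real \<Rightarrow> real \<times> real" where
  "tadd x y = (frac (fst x + fst y), frac (snd x + snd y))"

definition psi :: "real \<times> real \<Rightarrow> real" where
  "psi th = fst th + snd th"

definition proj1 :: "real \<times> real \<Rightarrow> real" where
  "proj1 th = fst th"

text \<open>The bracket {x} of the paper (not the usual fractional part).\<close>
definition brk :: "real \<Rightarrow> real" where
  "brk x = (if x < 1/2 then x else x - 1/2)"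

end

theory Submission
  imports Defs
begin

lemma region_sets:
  fixes a b c d e f :: real
  shows "{z::real\<times>real. a < fst z \<and> fst z < b \<and> c * fst z + d \<le> snd z \<and> snd z < e * fst z + f} \<in> sets borel"
proof -
  have 1: "{z::real\<times>real. a < fst z} \<in> sets borel"
    by (intro borel_open open_Collect_less continuous_intros)
  have 2: "{z::real\<times>real. fst z < b} \<in> sets borel"
    by (intro borel_open open_Collect_less continuous_intros)
  have 3: "{z::real\<times>real. c * fst z + d \<le> snd z} \<in> sets borel"
    by (intro borel_closed closed_Collect_le continuous_intros)
  have 4: "{z::real\<times>real. snd z < e * fst z + f} \<in> sets borel"
    by (intro borel_open open_Collect_less continuous_intros)
  have eq: "{z::real\<times>real. a < fst z \<and> fst z < b \<and> c * fst z + d \<le> snd z \<and> snd z < e * fst z + f}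
        = {z. a < fst z} \<inter> {z. fst z < b} \<inter> {z. c * fst z + d \<le> snd z} \<inter> {z. snd z < e * fst z + f}"
    by auto
  show ?thesis unfolding eq by (intro sets.Int 1 2 3 4)
qed

lemma region_emeasure:
  fixes a b c d e f :: real
  assumes ab: "a \<le> b" and nn: "\<And>x. a \<le> x \<Longrightarrow> x \<le> b \<Longrightarrow> c*x + d \<le> e*x + f"
  shows "emeasure lborel {z::real\<times>real. a < fst z \<and> fst z < b \<and> c * fst z + d \<le> snd z \<and> snd z < e * fst z + f}
         = ennreal ((e - c) * (b^2 - a^2)/2 + (f - d) * (b - a))"
proof -
  define A where "A = {z::real\<times>real. a < fst z \<and> fst z < b \<and> c * fst z + d \<le> snd z \<and> snd z < e * fst z + f}"
  have Am: "A \<in> sets (lborel \<Otimes>\<^sub>M lborel)"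
    unfolding A_def lborel_prod using region_sets by simp
  have sec: "emeasure lborel (Pair x -` A) = ennreal ((e - c) * x + (f - d)) * indicator {a<..<b} x" for x
  proof (cases "a < x \<and> x < b")
    case True
    then have "Pair x -` A = {c*x+d ..< e*x+f}" by (auto simp: A_def)
    moreover have "c*x+d \<le> e*x+f" using True nn by auto
    ultimately show ?thesis using True by (simp add: algebra_simps indicator_def)
  next
    case False
    then have "Pair x -` A = {}" by (auto simp: A_def)
    then show ?thesis using False by (simp add: indicator_def)
  qed
  have "emeasure lborel A = emeasure (lborel \<Otimes>\<^sub>M lborel) A" by (simp add: lborel_prod)
  also have "\<dots> = (\<integral>\<^sup>+x. emeasure lborel (Pair x -` A) \<partial>lborel)"
    by (rule lborel.emeasure_pair_measure_alt[OF Am])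
  also have "\<dots> = (\<integral>\<^sup>+x. ennreal ((e - c) * x + (f - d)) * indicator {a<..<b} x \<partial>lborel)"
    by (simp add: sec)
  also have "\<dots> = ennreal ((e - c) * (b^2 - a^2)/2 + (f - d) * (b - a))"
  proof (rule nn_integral_has_integral_lebesgue')
    show "0 \<le> (e - c) * x + (f - d)" if "x \<in> {a<..<b}" for x using nn[of x] that by (simp add: left_diff_distrib)
    have "((\<lambda>x. (e - c) * x + (f - d)) has_integral
           (((e - c) * b^2/2 + (f - d) * b) - ((e - c) * a^2/2 + (f - d) * a))) {a..b}"
      apply (rule fundamental_theorem_of_calculus[OF ab])
      apply (auto intro!: derivative_eq_intros simp: has_real_derivative_iff_has_vector_derivative[symmetric])
      done
    moreover have "((e - c) * b^2/2 + (f - d) * b) - ((e - c) * a^2/2 + (f - d) * a)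
        = (e - c) * (b^2 - a^2)/2 + (f - d) * (b - a)" by (simp add: field_simps)
    ultimately have "((\<lambda>x. (e - c) * x + (f - d)) has_integral ((e - c) * (b^2 - a^2)/2 + (f - d) * (b - a))) {a..b}"
      by simp
    then show "((\<lambda>x. (e - c) * x + (f - d)) has_integral ((e - c) * (b^2 - a^2)/2 + (f - d) * (b - a))) {a<..<b}"
      by (simp only: has_integral_Icc_iff_Ioo)
  qed
  finally show ?thesis unfolding A_def .
qed

definition SU :: "(real \<times> real) set" where
  "SU = {z. 1/2 \<le> fst z \<and> fst z < 1 \<and> 0 \<le> snd z \<and> snd z < 1/2 \<and> 5/4 \<le> 2 * fst z + snd z}"

definition SC :: "real \<Rightarrow> (real \<times> real) set" where
  "SC \<eta> = {z. 0 \<le> fst z \<and> 1/2 \<le> snd z \<and> snd z < 1 \<and> 3/4 \<le> 2 * fst z + snd z \<and> 2 * fst z + snd z < 1 - \<eta>}"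

lemma Q1:
  fixes u0 u1 u2 :: real
  assumes "2 * u1 = u0 + u2"
  shows "((u2 - u0) / 2)\<^sup>2 \<le> (1 - u0)\<^sup>2 + (1 - u2)\<^sup>2 - 2 * (1 - u1)\<^sup>2"
proof -
  have u1: "u1 = (u0 + u2) / 2" using assms by simp
  have "(1 - u0)\<^sup>2 + (1 - u2)\<^sup>2 - 2 * (1 - u1)\<^sup>2 - ((u2 - u0) / 2)\<^sup>2 = ((u2 - u0) / 2)\<^sup>2"
    unfolding u1 by (simp add: power2_eq_square field_simps)
  moreover have "0 \<le> ((u2 - u0) / 2)\<^sup>2" by simp
  ultimately show ?thesis by linarith
qed

lemma Q2:
  fixes u0 u1 u2 :: real
  assumes "2 * u1 = u0 + u2 + 1/2" and "u0 < 1/2"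
  shows "((u2 - u0 - 1/2) / 2)\<^sup>2 \<le> (1 - u0)\<^sup>2 + (1 - u2)\<^sup>2 - 2 * (1 - u1)\<^sup>2"
proof -
  have u1: "u1 = (u0 + u2 + 1/2) / 2" using assms by simp
  have "(1 - u0)\<^sup>2 + (1 - u2)\<^sup>2 - 2 * (1 - u1)\<^sup>2 - ((u2 - u0 - 1/2) / 2)\<^sup>2
        = 3/4 - u0 + ((u0 + 1/2 - u2) / 2)\<^sup>2"
    unfolding u1 by (simp add: power2_eq_square field_simps)
  moreover have "0 \<le> ((u0 + 1/2 - u2) / 2)\<^sup>2" by simp
  ultimately show ?thesis using assms(2) by linarith
qed

lemma brkU: "z \<in> SU \<Longrightarrow> brk (fst z) = fst z - 1/2"
  unfolding SU_def brk_def by auto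

lemma brkC: "0 \<le> \<eta> \<Longrightarrow> z \<in> SC \<eta> \<Longrightarrow> brk (fst z) = fst z"
  unfolding SC_def brk_def by auto

lemma core:
  fixes x0 y0 x1 y1 x2 y2 \<eta> k l :: real
  assumes m0: "(x0,y0) \<in> SU \<union> SC \<eta>" and m1: "(x1,y1) \<in> SU \<union> SC \<eta>"
    and m2: "(x2,y2) \<in> SU \<union> SC \<eta>" and eta: "0 \<le> \<eta>"
    and kx: "2*x1 = x0 + x2 + k" and ly: "2*y1 = y0 + y2 + l"
    and k: "k = -1 \<or> k = 0 \<or> k = 1" and l: "l = -1 \<or> l = 0 \<or> l = 1"
  shows "(x0 + y0) + (x2 + y2) + 1/2 \<le> 2 * (x1 + y1) \<or>
         ((x1 + y1) = (x0 + y0) + ((x2 - x0) / 2 + (y2 - y0) / 2) \<and>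
          (\<bar>(x2 - x0) / 2 + (y2 - y0) / 2\<bar> \<le> \<eta> / 2 \<longrightarrow>
           ((x2 - x0) / 2)\<^sup>2 \<le> (1 - brk x0)\<^sup>2 + (1 - brk x2)\<^sup>2 - 2 * (1 - brk x1)\<^sup>2))"
proof -
  have mnn: "0 \<le> k + l"
  proof (rule ccontr)
    assume "\<not> 0 \<le> k + l"
    then have kl: "(k = -1 \<and> l = -1) \<or> (k = -1 \<and> l = 0) \<or> (k = 0 \<and> l = -1) \<or> (k = -1 \<and> l = 1) \<or> (k = 1 \<and> l = -1)"
      using k l by auto
    then have kl2: "(k = -1 \<and> l = -1) \<or> (k = -1 \<and> l = 0) \<or> (k = 0 \<and> l = -1)"
      using \<open>\<not> 0 \<le> k + l\<close> by auto
    show False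
      using m0 m1 m2 kx ly kl2 eta unfolding SU_def SC_def by (auto; linarith)
  qed
  show ?thesis
  proof (cases "1 \<le> k + l")
    case True
    then show ?thesis using kx ly by auto
  next
    case False
    then have kl0: "k + l = 0" using mnn k l by auto
    have eq: "(x1 + y1) = (x0 + y0) + ((x2 - x0) / 2 + (y2 - y0) / 2)"
      using kx ly kl0 by (simp add: field_simps)
    have near: "((x2 - x0) / 2)\<^sup>2 \<le> (1 - brk x0)\<^sup>2 + (1 - brk x2)\<^sup>2 - 2 * (1 - brk x1)\<^sup>2"
      if nr: "\<bar>(x2 - x0) / 2 + (y2 - y0) / 2\<bar> \<le> \<eta> / 2"
    proof -
      have nr2: "(x2 + y2) - (x0 + y0) \<le> \<eta>" "(x0 + y0) - (x2 + y2) \<le> \<eta>"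
        using nr by (auto simp: abs_le_iff field_simps)
      have kk: "(k = 0 \<and> l = 0) \<or> (k = 1 \<and> l = -1) \<or> (k = -1 \<and> l = 1)"
        using k l kl0 by auto
      consider (UUU) "(x0,y0) \<in> SU" "(x1,y1) \<in> SU" "(x2,y2) \<in> SU"
        | (UUC) "(x0,y0) \<in> SU" "(x1,y1) \<in> SU" "(x2,y2) \<in> SC \<eta>"
        | (UCU) "(x0,y0) \<in> SU" "(x1,y1) \<in> SC \<eta>" "(x2,y2) \<in> SU"
        | (UCC) "(x0,y0) \<in> SU" "(x1,y1) \<in> SC \<eta>" "(x2,y2) \<in> SC \<eta>"
        | (CUU) "(x0,y0) \<in> SC \<eta>" "(x1,y1) \<in> SU" "(x2,y2) \<in> SU"
        | (CUC) "(x0,y0) \<in> SC \<eta>" "(x1,y1) \<in> SU" "(x2,y2) \<in> SC \<eta>"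
        | (CCU) "(x0,y0) \<in> SC \<eta>" "(x1,y1) \<in> SC \<eta>" "(x2,y2) \<in> SU"
        | (CCC) "(x0,y0) \<in> SC \<eta>" "(x1,y1) \<in> SC \<eta>" "(x2,y2) \<in> SC \<eta>"
        using m0 m1 m2 by auto
      then show ?thesis
      proof cases
        case UUU
        then have "k = 0" using kx kk unfolding SU_def by auto
        then show ?thesis using brkU[OF UUU(1)] brkU[OF UUU(2)] brkU[OF UUU(3)] kx
          using Q1[of "x1 - 1/2" "x0 - 1/2" "x2 - 1/2"] by simp
      next
        case UUC
        then have "k = 1" using kx ly kk nr2 eta unfolding SU_def SC_def by (auto; linarith)
        then have a1: "2 * (x1 - 1/2) = (x0 - 1/2) + x2 + 1/2" using kx by simp
        have a2: "x0 - 1/2 < 1/2" using UUC(1) unfolding SU_def by simp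
        have q: "((x2 - (x0 - 1/2) - 1/2) / 2)\<^sup>2 \<le> (1 - (x0 - 1/2))\<^sup>2 + (1 - x2)\<^sup>2 - 2 * (1 - (x1 - 1/2))\<^sup>2"
          by (rule Q2[OF a1 a2])
        have e: "x2 - (x0 - 1/2) - 1/2 = x2 - x0" by simp
        show ?thesis unfolding brkU[OF UUC(1), simplified] brkU[OF UUC(2), simplified] brkC[OF eta UUC(3), simplified]
          using q unfolding e .
      next
        case UCU
        then have "k = -1" using kx ly kk nr2 eta unfolding SU_def SC_def by (auto; linarith)
        then have a1: "2 * x1 = (x0 - 1/2) + (x2 - 1/2)" using kx by simp
        have q: "(((x2 - 1/2) - (x0 - 1/2)) / 2)\<^sup>2 \<le> (1 - (x0 - 1/2))\<^sup>2 + (1 - (x2 - 1/2))\<^sup>2 - 2 * (1 - x1)\<^sup>2"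
          by (rule Q1[OF a1])
        have e: "(x2 - 1/2) - (x0 - 1/2) = x2 - x0" by simp
        show ?thesis unfolding brkU[OF UCU(1), simplified] brkC[OF eta UCU(2), simplified] brkU[OF UCU(3), simplified]
          using q unfolding e .
      next
        case UCC
        then show ?thesis using kx ly kk nr2 eta unfolding SU_def SC_def by (auto; linarith)
      next
        case CUU
        then have "k = 1" using kx ly kk nr2 eta unfolding SU_def SC_def by (auto; linarith)
        then have a1: "2 * (x1 - 1/2) = (x2 - 1/2) + x0 + 1/2" using kx by simp
        have a2: "x2 - 1/2 < 1/2" using CUU(3) unfolding SU_def by simp
        have q: "((x0 - (x2 - 1/2) - 1/2) / 2)\<^sup>2 \<le> (1 - (x2 - 1/2))\<^sup>2 + (1 - x0)\<^sup>2 - 2 * (1 - (x1 - 1/2))\<^sup>2"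
          by (rule Q2[OF a1 a2])
        have e: "((x0 - (x2 - 1/2) - 1/2) / 2)\<^sup>2 = ((x2 - x0) / 2)\<^sup>2" by (simp add: power2_eq_square algebra_simps)
        show ?thesis unfolding brkC[OF eta CUU(1), simplified] brkU[OF CUU(2), simplified] brkU[OF CUU(3), simplified]
          using q unfolding e by linarith
      next
        case CUC
        then have "k = 1" using kx ly kk nr2 eta unfolding SU_def SC_def by (auto; linarith)
        then have a1: "2 * (x1 - 1/2) = x0 + x2" using kx by simp
        have q: "((x2 - x0) / 2)\<^sup>2 \<le> (1 - x0)\<^sup>2 + (1 - x2)\<^sup>2 - 2 * (1 - (x1 - 1/2))\<^sup>2"
          by (rule Q1[OF a1])
        show ?thesis unfolding brkC[OF eta CUC(1), simplified] brkU[OF CUC(2), simplified] brkC[OF eta CUC(3), simplified]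
          using q .
      next
        case CCU
        then show ?thesis using kx ly kk nr2 eta unfolding SU_def SC_def by (auto; linarith)
      next
        case CCC
        then have "k = 0" using kx kk eta unfolding SC_def by (auto; linarith)
        then show ?thesis using brkC[OF eta CCC(1)] brkC[OF eta CCC(2)] brkC[OF eta CCC(3)] kx
          using Q1[of "x1" "x0" "x2"] by simp
      qed
    qed
    show ?thesis using eq near by blast
  qed
qed

lemma int_range3:
  fixes n :: int
  assumes "-2 < real_of_int n" "real_of_int n < 2"
  shows "real_of_int n = -1 \<or> real_of_int n = 0 \<or> real_of_int n = 1"
proof -
  have "-2 < n" "n < 2" using assms by linarith+
  then have "n = -1 \<or> n = 0 \<or> n = 1" by auto
  then show ?thesis by auto
qed

lemma ap_frac:
  fixes x0 a :: real
  assumes "0 \<le> x0" "x0 < 1"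
  shows "\<exists>k::real. 2 * frac (x0 + a) = x0 + frac (frac (x0 + a) + a) + k \<and> (k = -1 \<or> k = 0 \<or> k = 1)"
proof -
  define x1 where "x1 = frac (x0 + a)"
  define x2 where "x2 = frac (x1 + a)"
  define k where "k = real_of_int (\<lfloor>x1 + a\<rfloor> - \<lfloor>x0 + a\<rfloor>)"
  have e1: "x1 = x0 + a - of_int \<lfloor>x0 + a\<rfloor>" unfolding x1_def frac_def by simp
  have e2: "x2 = x1 + a - of_int \<lfloor>x1 + a\<rfloor>" unfolding x2_def frac_def by simp
  have eq: "2 * x1 = x0 + x2 + k" unfolding k_def using e1 e2 by simp
  have b1: "0 \<le> x1" "x1 < 1" unfolding x1_def by (auto simp: frac_lt_1)
  have b2: "0 \<le> x2" "x2 < 1" unfolding x2_def by (auto simp: frac_lt_1)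
  have "-2 < k" "k < 2" using eq b1 b2 assms by linarith+
  then have "k = -1 \<or> k = 0 \<or> k = 1" unfolding k_def by (rule int_range3)
  then show ?thesis using eq unfolding x1_def x2_def by blast
qed

lemma SU_borel: "SU \<in> sets borel"
proof -
  have eq: "SU = {z. 1/2 \<le> fst z} \<inter> {z. fst z < 1} \<inter> {z. 0 \<le> snd z} \<inter> {z. snd z < 1/2} \<inter> {z::real\<times>real. 5/4 \<le> 2 * fst z + snd z}"
    unfolding SU_def by auto
  show ?thesis unfolding eq
    by (intro sets.Int borel_open borel_closed open_Collect_less closed_Collect_le continuous_intros)
qed

lemma SC_borel: "SC \<eta> \<in> sets borel"
proof -
  have eq: "SC \<eta> = {z. 0 \<le> fst z} \<inter> {z. 1/2 \<le> snd z} \<inter> {z. snd z < 1} \<inter> {z. 3/4 \<le> 2 * fst z + snd z} \<inter> {z::real\<times>real. 2 * fst z + snd z < 1 - \<eta>}"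
    unfolding SC_def by auto
  show ?thesis unfolding eq
    by (intro sets.Int borel_open borel_closed open_Collect_less closed_Collect_le continuous_intros)
qed

lemma measure_bound:
  fixes \<eta> :: real
  assumes eta0: "0 \<le> \<eta>" and eta1: "\<eta> \<le> 1/4"
  shows "9/32 - \<eta>/4 \<le> measure lebesgue (SU \<union> SC \<eta>)"
proof -
  define R1 where "R1 = {z::real\<times>real. 1/2 < fst z \<and> fst z < 5/8 \<and> (-2) * fst z + 5/4 \<le> snd z \<and> snd z < 0 * fst z + 1/2}"
  define R2 where "R2 = {z::real\<times>real. 5/8 < fst z \<and> fst z < 1 \<and> 0 * fst z + 0 \<le> snd z \<and> snd z < 0 * fst z + 1/2}"
  define C1 where "C1 = {z::real\<times>real. 0 < fst z \<and> fst z < 1/8 \<and> (-2) * fst z + 3/4 \<le> snd z \<and> snd z < (-2) * fst z + (1 - \<eta>)}"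
  define C2 where "C2 = {z::real\<times>real. 1/8 < fst z \<and> fst z < (1/2 - \<eta>)/2 \<and> 0 * fst z + 1/2 \<le> snd z \<and> snd z < (-2) * fst z + (1 - \<eta>)}"
  define A1 where "A1 = (0 - (-2)) * ((5/8)^2 - (1/2)^2)/2 + (1/2 - 5/4) * (5/8 - 1/2::real)"
  define A2 where "A2 = (0 - 0) * (1^2 - (5/8)^2)/2 + (1/2 - 0) * (1 - 5/8::real)"
  define A3 where "A3 = ((-2) - (-2)) * ((1/8)^2 - 0^2)/2 + ((1 - \<eta>) - 3/4) * (1/8 - 0::real)"
  define A4 where "A4 = ((-2) - 0) * (((1/2 - \<eta>)/2)^2 - (1/8)^2)/2 + ((1 - \<eta>) - 1/2) * ((1/2 - \<eta>)/2 - 1/8::real)"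
  have e1: "emeasure lborel R1 = ennreal A1" unfolding R1_def A1_def
    by (rule region_emeasure) auto
  have e2: "emeasure lborel R2 = ennreal A2" unfolding R2_def A2_def
    by (rule region_emeasure) auto
  have e3: "emeasure lborel C1 = ennreal A3" unfolding C1_def A3_def
    by (rule region_emeasure) (use eta1 in auto)
  have e4: "emeasure lborel C2 = ennreal A4" unfolding C2_def A4_def
    by (rule region_emeasure) (use eta1 in auto)
  have s1: "R1 \<in> sets lborel" unfolding R1_def sets_lborel by (rule region_sets)
  have s2: "R2 \<in> sets lborel" unfolding R2_def sets_lborel by (rule region_sets)
  have s3: "C1 \<in> sets lborel" unfolding C1_def sets_lborel by (rule region_sets)
  have s4: "C2 \<in> sets lborel" unfolding C2_def sets_lborel by (rule region_sets)
  have A1v: "A1 = 3/64" unfolding A1_def by (simp add: power2_eq_square)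
  have A2v: "A2 = 3/16" unfolding A2_def by simp
  have A3v: "A3 = (1/4 - \<eta>) / 8" unfolding A3_def by (simp add: field_simps)
  have A4v: "A4 = (1/8 - \<eta>/2)^2" unfolding A4_def by (simp add: power2_eq_square field_simps)
  have A3n: "0 \<le> A3" using A3v eta1 by simp
  have A4n: "0 \<le> A4" using A4v by simp
  have d12: "R1 \<inter> R2 = {}" unfolding R1_def R2_def by auto
  have d3: "(R1 \<union> R2) \<inter> C1 = {}" unfolding R1_def R2_def C1_def by auto
  have d4: "(R1 \<union> R2 \<union> C1) \<inter> C2 = {}" using eta0 unfolding R1_def R2_def C1_def C2_def by auto
  have eU: "emeasure lborel (R1 \<union> R2 \<union> C1 \<union> C2) = ennreal (A1 + A2 + A3 + A4)"
  proof -
    have "emeasure lborel (R1 \<union> R2) = emeasure lborel R1 + emeasure lborel R2"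
      using plus_emeasure[OF s1 s2 d12] by simp
    moreover have "emeasure lborel (R1 \<union> R2 \<union> C1) = emeasure lborel (R1 \<union> R2) + emeasure lborel C1"
      using plus_emeasure[OF sets.Un[OF s1 s2] s3 d3] by simp
    moreover have "emeasure lborel (R1 \<union> R2 \<union> C1 \<union> C2) = emeasure lborel (R1 \<union> R2 \<union> C1) + emeasure lborel C2"
      using plus_emeasure[OF sets.Un[OF sets.Un[OF s1 s2] s3] s4 d4] by simp
    ultimately show ?thesis using e1 e2 e3 e4 A3n A4n
      by (simp add: A1v A2v ennreal_plus[symmetric] del: ennreal_plus)
  qed
  have sub: "R1 \<union> R2 \<union> C1 \<union> C2 \<subseteq> SU \<union> SC \<eta>"
    using eta0 unfolding R1_def R2_def C1_def C2_def SU_def SC_def by auto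
  have Sb: "SU \<union> SC \<eta> \<in> sets lborel" using SU_borel SC_borel by simp
  have box: "SU \<union> SC \<eta> \<subseteq> cbox (0,0) (1,1)"
    using eta0 unfolding SU_def SC_def by (auto simp: cbox_def Basis_prod_def inner_prod_def)
  have fin: "emeasure lborel (SU \<union> SC \<eta>) < \<infinity>"
  proof -
    have "emeasure lborel (SU \<union> SC \<eta>) \<le> emeasure lborel (cbox (0::real,0::real) (1,1))"
      by (rule emeasure_mono[OF box]) simp
    also have "\<dots> < \<infinity>" by (rule emeasure_lborel_cbox_finite)
    finally show ?thesis .
  qed
  have mono: "ennreal (A1 + A2 + A3 + A4) \<le> emeasure lborel (SU \<union> SC \<eta>)"
    using emeasure_mono[OF sub Sb] eU by simp
  have nn: "0 \<le> A1 + A2 + A3 + A4" using A3n A4n by (simp add: A1v A2v)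
  have "A1 + A2 + A3 + A4 = enn2real (ennreal (A1 + A2 + A3 + A4))"
    using nn by (simp only: enn2real_ennreal)
  also have "\<dots> \<le> enn2real (emeasure lborel (SU \<union> SC \<eta>))"
    by (rule enn2real_mono[OF mono]) (use fin in simp)
  also have "\<dots> = measure lborel (SU \<union> SC \<eta>)" by (simp add: measure_def)
  finally have "A1 + A2 + A3 + A4 \<le> measure lborel (SU \<union> SC \<eta>)" .
  moreover have "measure lebesgue (SU \<union> SC \<eta>) = measure lborel (SU \<union> SC \<eta>)"
    using Sb by simp
  moreover have "9/32 - \<eta>/4 \<le> A1 + A2 + A3 + A4"
  proof -
    have A4': "A4 = 1/64 - \<eta>/8 + \<eta>*\<eta>/4" using A4v by (simp add: power2_eq_square field_simps)
    have p: "0 \<le> \<eta>*\<eta>/4" by simp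
    have "9/32 - \<eta>/4 \<le> 3/64 + 3/16 + (1/4 - \<eta>)/8 + (1/64 - \<eta>/8 + \<eta>*\<eta>/4)"
      using p by (simp add: field_simps)
    then show ?thesis unfolding A1v A2v A3v A4' .
  qed
  ultimately show ?thesis by linarith
qed

theorem proposition3p3:
  fixes \<epsilon> :: real
  assumes "\<epsilon> > 0"
  shows "\<exists>S. S \<subseteq> T2 \<and> S \<in> sets lebesgue \<and> measure lebesgue S \<ge> 9/32 - \<epsilon> \<and>
    (\<forall>\<theta>\<in>T2. \<forall>\<alpha>\<in>T2.
       (\<theta> \<in> S \<and> tadd \<theta> \<alpha> \<in> S \<and> tadd (tadd \<theta> \<alpha>) \<alpha> \<in> S) \<longrightarrow>
       (let \<theta>1 = tadd \<theta> \<alpha>; \<theta>2 = tadd (tadd \<theta> \<alpha>) \<alpha>;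
            d1 = (fst \<theta>2 - fst \<theta>) / 2; d2 = (snd \<theta>2 - snd \<theta>) / 2
        in 2 * psi \<theta>1 \<ge> psi \<theta> + psi \<theta>2 + 1/2 \<or>
           (psi \<theta>1 = psi \<theta> + (d1 + d2) \<and>
            (\<bar>d1 + d2\<bar> \<le> \<epsilon> / 1000 \<longrightarrow>
               (1 - brk (proj1 \<theta>))\<^sup>2 + (1 - brk (proj1 \<theta>2))\<^sup>2
                 - 2 * (1 - brk (proj1 \<theta>1))\<^sup>2 \<ge> d1\<^sup>2))))"
proof (cases "\<epsilon> < 9/32")
  case False
  show ?thesis
    by (rule exI[of _ "{}"]) (use False in auto)
next
  case True
  define \<eta> where "\<eta> = \<epsilon> / 500"
  have eta0: "0 \<le> \<eta>" and eta1: "\<eta> \<le> 1/4" using assms True by (auto simp: \<eta>_def)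
  have eta2: "\<eta> / 2 = \<epsilon> / 1000" by (simp add: \<eta>_def)
  define S where "S = SU \<union> SC \<eta>"
  have sub: "S \<subseteq> T2"
    using eta0 unfolding S_def SU_def SC_def T2_def by auto
  have leb: "S \<in> sets lebesgue"
    using SU_borel SC_borel unfolding S_def by simp
  have meas: "9/32 - \<epsilon> \<le> measure lebesgue S"
    using measure_bound[OF eta0 eta1] assms unfolding S_def \<eta>_def by linarith
  have pts: "\<forall>\<theta>\<in>T2. \<forall>\<alpha>\<in>T2.
       (\<theta> \<in> S \<and> tadd \<theta> \<alpha> \<in> S \<and> tadd (tadd \<theta> \<alpha>) \<alpha> \<in> S) \<longrightarrow>
       (let \<theta>1 = tadd \<theta> \<alpha>; \<theta>2 = tadd (tadd \<theta> \<alpha>) \<alpha>;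
            d1 = (fst \<theta>2 - fst \<theta>) / 2; d2 = (snd \<theta>2 - snd \<theta>) / 2
        in 2 * psi \<theta>1 \<ge> psi \<theta> + psi \<theta>2 + 1/2 \<or>
           (psi \<theta>1 = psi \<theta> + (d1 + d2) \<and>
            (\<bar>d1 + d2\<bar> \<le> \<epsilon> / 1000 \<longrightarrow>
               (1 - brk (proj1 \<theta>))\<^sup>2 + (1 - brk (proj1 \<theta>2))\<^sup>2
                 - 2 * (1 - brk (proj1 \<theta>1))\<^sup>2 \<ge> d1\<^sup>2)))"
  proof (intro ballI impI)
    fix \<theta> \<alpha> assume th: "\<theta> \<in> T2" and al: "\<alpha> \<in> T2"
      and mem: "\<theta> \<in> S \<and> tadd \<theta> \<alpha> \<in> S \<and> tadd (tadd \<theta> \<alpha>) \<alpha> \<in> S"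
    obtain x0 y0 where th0: "\<theta> = (x0, y0)" by (cases \<theta>)
    obtain a1 a2 where al0: "\<alpha> = (a1, a2)" by (cases \<alpha>)
    define x1 where "x1 = frac (x0 + a1)"
    define y1 where "y1 = frac (y0 + a2)"
    define x2 where "x2 = frac (x1 + a1)"
    define y2 where "y2 = frac (y1 + a2)"
    have t1: "tadd \<theta> \<alpha> = (x1, y1)" unfolding th0 al0 x1_def y1_def tadd_def by simp
    have t2: "tadd (tadd \<theta> \<alpha>) \<alpha> = (x2, y2)"
    proof -
      have "tadd (tadd \<theta> \<alpha>) \<alpha> = tadd (x1, y1) \<alpha>" using t1 by simp
      also have "\<dots> = (x2, y2)" unfolding al0 x2_def y2_def tadd_def by simp
      finally show ?thesis .
    qed
    have bx: "0 \<le> x0" "x0 < 1" "0 \<le> y0" "y0 < 1" using th unfolding th0 T2_def by auto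
    obtain k where k: "2 * x1 = x0 + x2 + k" "k = -1 \<or> k = 0 \<or> k = 1"
      using ap_frac[OF bx(1,2), of a1] unfolding x1_def x2_def by blast
    obtain l where l: "2 * y1 = y0 + y2 + l" "l = -1 \<or> l = 0 \<or> l = 1"
      using ap_frac[OF bx(3,4), of a2] unfolding y1_def y2_def by blast
    have m0: "(x0, y0) \<in> SU \<union> SC \<eta>" using mem unfolding th0 S_def by simp
    have m1: "(x1, y1) \<in> SU \<union> SC \<eta>" using mem t1 unfolding S_def by simp
    have m2: "(x2, y2) \<in> SU \<union> SC \<eta>" using mem t2 unfolding S_def by simp
    have c: "(x0 + y0) + (x2 + y2) + 1/2 \<le> 2 * (x1 + y1) \<or>
         ((x1 + y1) = (x0 + y0) + ((x2 - x0) / 2 + (y2 - y0) / 2) \<and>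
          (\<bar>(x2 - x0) / 2 + (y2 - y0) / 2\<bar> \<le> \<eta> / 2 \<longrightarrow>
           ((x2 - x0) / 2)\<^sup>2 \<le> (1 - brk x0)\<^sup>2 + (1 - brk x2)\<^sup>2 - 2 * (1 - brk x1)\<^sup>2))"
      by (rule core[OF m0 m1 m2 eta0 k(1) l(1) k(2) l(2)])
    show "let \<theta>1 = tadd \<theta> \<alpha>; \<theta>2 = tadd (tadd \<theta> \<alpha>) \<alpha>;
            d1 = (fst \<theta>2 - fst \<theta>) / 2; d2 = (snd \<theta>2 - snd \<theta>) / 2
        in 2 * psi \<theta>1 \<ge> psi \<theta> + psi \<theta>2 + 1/2 \<or>
           (psi \<theta>1 = psi \<theta> + (d1 + d2) \<and>
            (\<bar>d1 + d2\<bar> \<le> \<epsilon> / 1000 \<longrightarrow>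
               (1 - brk (proj1 \<theta>))\<^sup>2 + (1 - brk (proj1 \<theta>2))\<^sup>2
                 - 2 * (1 - brk (proj1 \<theta>1))\<^sup>2 \<ge> d1\<^sup>2))"
      unfolding Let_def t2 unfolding t1 unfolding th0 psi_def proj1_def fst_conv snd_conv eta2[symmetric]
      using c by simp
  qed
  show ?thesis using sub leb meas pts by blast
qed

end
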